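(* If there exists a depth assignment $d:\Sigma^n\to\Sigma$ such that (i) every pair of strings $s,t\in\Sigma^n$ with $d_s\ne d_t$ share a symbol, and (ii) the valid subgraph of $B_n$ has a Hamiltonian cycle, then that cycle $s_0,s_1,\dots,s_{N-1}$ (with $N=k^n$) corresponds to a de Bruijn sequence $s_0[0]s_1[0]\cdots s_{N-1}[0]$ of order $n$ whose discrepancy is at most $n$.
   Context: Let $k\ge 1$ be an integer, $\Sigma=\{0,1,\dots,k-1\}$ with arithmetic on symbols taken modulo $k$, and $n\ge 1$. For $s\in\Sigma^n$ write $s=s[0]\cdots s[n-1]$. The de Bruijn graph $B_n$ has node set $\Sigma^n$ and an arc $(s,t)$ iff $s[1]\cdots s[n-1]=t[0]\cdots t[n-2]$. A depth assignment is any function $d:\Sigma^n\to\Sigma$, written $s\mapsto d_s$. An arc $(s,t)$ of $B_n$ is valid (with respect to $d$) if, with $b=s[0]$ and $c=t[n-1]$, either ($b+1=c$ and $d_s=d_t$) or ($b+1=d_t$ and $c=d_s$); the valid arcs form the valid subgraph. Two strings share a symbol if some $c\in\Sigma$ occurs in both. A de Bruijn sequence of order $n$ is a circular string of length $k^n$ in which every string in $\Sigma^n$ occurs exactly once. The discrepancy of a string $w$ is the maximum over all substrings $s$ of $w$ (viewed circularly) of $\max_{a\in\Sigma}|s|_a-\min_{c\in\Sigma}|s|_c$, where $|s|_a$ is the number of occurrences of $a$ in $s$. *)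

theory Defs
  imports Main
begin

definition strings :: "nat \<Rightarrow> nat \<Rightarrow> nat list set" where
  "strings k n = {s. length s = n \<and> set s \<subseteq> {..<k}}"

definition db_arc :: "nat \<Rightarrow> nat \<Rightarrow> nat list \<Rightarrow> nat list \<Rightarrow> bool" where
  "db_arc k n s t \<longleftrightarrow> s \<in> strings k n \<and> t \<in> strings k n \<and> drop 1 s = take (n - 1) t"

definition valid_arc :: "nat \<Rightarrow> nat \<Rightarrow> (nat list \<Rightarrow> nat) \<Rightarrow> nat list \<Rightarrow> nat list \<Rightarrow> bool" where
  "valid_arc k n d s t \<longleftrightarrow> db_arc k n s t \<and>
     (let b = s ! 0; c = t ! (n - 1) in
       ((b + 1) mod k = c \<and> d s = d t) \<or> ((b + 1) mod k = d t \<and> c = d s))"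

definition ham_cycle_valid :: "nat \<Rightarrow> nat \<Rightarrow> (nat list \<Rightarrow> nat) \<Rightarrow> nat list list \<Rightarrow> bool" where
  "ham_cycle_valid k n d cyc \<longleftrightarrow> distinct cyc \<and> set cyc = strings k n \<and>
     (\<forall>i < length cyc. valid_arc k n d (cyc ! i) (cyc ! ((i + 1) mod length cyc)))"

definition circ_sub :: "nat list \<Rightarrow> nat \<Rightarrow> nat \<Rightarrow> nat list" where
  "circ_sub w i l = map (\<lambda>j. w ! ((i + j) mod length w)) [0..<l]"

definition de_bruijn_seq :: "nat \<Rightarrow> nat \<Rightarrow> nat list \<Rightarrow> bool" where
  "de_bruijn_seq k n w \<longleftrightarrow> length w = k ^ n \<and> set w \<subseteq> {..<k} \<and>
     (\<forall>x \<in> strings k n. card {i. i < length w \<and> circ_sub w i n = x} = 1)"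

definition circ_substrings :: "nat list \<Rightarrow> nat list set" where
  "circ_substrings w = {circ_sub w i l | i l. i < length w \<and> l \<le> length w}"

definition imbalance :: "nat \<Rightarrow> nat list \<Rightarrow> int" where
  "imbalance k s = int (Max {count_list s a | a. a < k}) - int (Min {count_list s c | c. c < k})"

definition discrepancy :: "nat \<Rightarrow> nat list \<Rightarrow> int" where
  "discrepancy k w = Max (imbalance k ` circ_substrings w)"

end

theory Submission
  imports Defs
begin

lemma bij_mod_interval:
  assumes "k > (0::nat)"
  shows "bij_betw (\<lambda>x. x mod k) {m..<m+k} {..<k}"
proof -
  have inj: "inj_on (\<lambda>x. x mod k) {m..<m+k}"
  proof (rule inj_onI)
    fix x y assume x: "x \<in> {m..<m+k}" and y: "y \<in> {m..<m+k}" and e: "x mod k = y mod k"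
    show "x = y"
    proof (rule ccontr)
      assume "x \<noteq> y"
      then consider "x < y" | "y < x" by linarith
      then show False
      proof cases
        case 1
        then have "k dvd (y - x)" using e by (metis less_imp_le mod_eq_dvd_iff_nat)
        moreover have "0 < y - x" "y - x < k" using 1 x y by auto
        ultimately show False by (meson nat_dvd_not_less)
      next
        case 2
        then have "k dvd (x - y)" using e by (metis less_imp_le mod_eq_dvd_iff_nat)
        moreover have "0 < x - y" "x - y < k" using 2 x y by auto
        ultimately show False by (meson nat_dvd_not_less)
      qed
    qed
  qed
  have "(\<lambda>x. x mod k) ` {m..<m+k} \<subseteq> {..<k}" using assms by auto
  moreover have "card ((\<lambda>x. x mod k) ` {m..<m+k}) = card {..<k}"
    using card_image[OF inj] by simp
  ultimately have "(\<lambda>x. x mod k) ` {m..<m+k} = {..<k}"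
    by (simp add: card_subset_eq)
  then show ?thesis using inj by (simp add: bij_betw_def)
qed

lemma interval_bound:
  fixes C Mi Mj :: "nat \<Rightarrow> int"
  assumes k: "k \<ge> 1"
    and D: "\<forall>y<k. Mj y - Mi y = C ((y + k - 1) mod k) - C y"
    and nni: "\<forall>y. Mi y \<ge> 0" and nnj: "\<forall>y. Mj y \<ge> 0"
    and si: "(\<Sum>y<k. Mi y) = int n + 1" and sj: "(\<Sum>y<k. Mj y) = int n + 1"
    and e: "e < k" "Mi e \<ge> 1" "Mj e \<ge> 1"
    and a: "a < k" and a': "a' < k"
  shows "C a - C a' \<le> int n"
proof -
  define r where "r = (a' + k - a) mod k"
  have rk: "r < k" using k by (simp add: r_def)
  have ar: "(a + r) mod k = a'"
  proof -
    have "(a + r) mod k = (a + (a' + k - a)) mod k" by (simp add: r_def mod_add_right_eq)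
    also have "a + (a' + k - a) = a' + k" using a by simp
    finally show ?thesis using a' by simp
  qed
  have tele: "\<And>r. C a - C ((a + r) mod k) = (\<Sum>x\<in>{a+1..<a+1+r}. Mj (x mod k) - Mi (x mod k))"
  proof -
    fix r show "C a - C ((a + r) mod k) = (\<Sum>x\<in>{a+1..<a+1+r}. Mj (x mod k) - Mi (x mod k))"
    proof (induction r)
      case 0 then show ?case using a by simp
    next
      case (Suc r)
      have m: "((a + Suc r) mod k + k - 1) mod k = (a + r) mod k"
      proof -
        have "((a + Suc r) mod k + k - 1) mod k = ((a + Suc r) mod k + (k - 1)) mod k" using k by simp
        also have "\<dots> = (a + Suc r + (k - 1)) mod k" by (simp add: mod_add_left_eq)
        also have "a + Suc r + (k - 1) = (a + r) + k" using k by simp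
        finally show ?thesis by simp
      qed
      have "Mj ((a + Suc r) mod k) - Mi ((a + Suc r) mod k) = C ((a + r) mod k) - C ((a + Suc r) mod k)"
        using D[rule_format, of "(a + Suc r) mod k"] k m by simp
      then show ?case using Suc by (simp add: add.commute)
    qed
  qed
  define A1 where "A1 = {a+1..<a+1+r}"
  define A2 where "A2 = {a+1+r..<a+1+k}"
  have U: "A1 \<union> A2 = {a+1..<a+1+k}" "A1 \<inter> A2 = {}" using rk by (auto simp: A1_def A2_def)
  have bij: "bij_betw (\<lambda>x. x mod k) {a+1..<a+1+k} {..<k}" using bij_mod_interval[of k "a+1"] k by simp
  have full: "\<And>f. (\<Sum>x\<in>{a+1..<a+1+k}. f (x mod k)) = (\<Sum>y<k. f y)"
    using sum.reindex_bij_betw[OF bij] by blast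
  have split: "\<And>f::nat\<Rightarrow>int. (\<Sum>x\<in>A1. f (x mod k)) + (\<Sum>x\<in>A2. f (x mod k)) = (\<Sum>y<k. f y)"
    using full U by (metis sum.union_disjoint finite_atLeastLessThan A1_def A2_def)
  have diff: "C a - C a' = (\<Sum>x\<in>A1. Mj (x mod k)) - (\<Sum>x\<in>A1. Mi (x mod k))"
    using tele[of r] ar by (simp add: A1_def sum_subtractf)
  have p1: "(\<Sum>x\<in>A1. Mi (x mod k)) \<ge> 0" "(\<Sum>x\<in>A2. Mj (x mod k)) \<ge> 0"
    using nni nnj by (auto intro: sum_nonneg)
  obtain x where x: "x \<in> {a+1..<a+1+k}" "x mod k = e" using bij e(1)
    by (metis bij_betw_iff_bijections lessThan_iff)
  show ?thesis
  proof (cases "x \<in> A1")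
    case True
    have "Mi e \<le> (\<Sum>x\<in>A1. Mi (x mod k))"
      using member_le_sum[of x A1 "\<lambda>x. Mi (x mod k)"] True x nni by (simp add: A1_def)
    then show ?thesis using diff split[of Mj] sj p1 e by linarith
  next
    case False
    then have "x \<in> A2" using x U by auto
    have "Mj e \<le> (\<Sum>x\<in>A2. Mj (x mod k))"
      using member_le_sum[of x A2 "\<lambda>x. Mj (x mod k)"] \<open>x \<in> A2\<close> x nnj by (simp add: A2_def)
    then show ?thesis using diff split[of Mj] sj p1 e by linarith
  qed
qed

lemma mod_pred_iff:
  assumes "a < k" "b < (k::nat)"
  shows "((b + 1) mod k = a) \<longleftrightarrow> ((a + k - 1) mod k = b)"
proof (cases "b + 1 = k")
  case True
  then show ?thesis using assms by (cases "a = 0") (auto simp: mod_if)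
next
  case False
  then have "b + 1 < k" using assms by simp
  then show ?thesis using assms by (cases "a = 0") (auto simp: mod_if)
qed

theorem theorem3:
  fixes k n :: nat and d :: "nat list \<Rightarrow> nat" and cyc :: "nat list list"
  assumes "k \<ge> 1" and "n \<ge> 1"
    and "\<forall>s \<in> strings k n. d s < k"
    and "\<forall>s \<in> strings k n. \<forall>t \<in> strings k n. d s \<noteq> d t \<longrightarrow> (\<exists>c. c \<in> set s \<and> c \<in> set t)"
    and "ham_cycle_valid k n d cyc"
  shows "de_bruijn_seq k n (map (\<lambda>s. s ! 0) cyc)
         \<and> discrepancy k (map (\<lambda>s. s ! 0) cyc) \<le> int n"
proof -
  note k = assms(1) and n = assms(2) and dk = assms(3) and share = assms(4)
  define N where "N = length cyc"
  define w where "w = map (\<lambda>s. s ! 0) cyc"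
  have dist: "distinct cyc" and setc: "set cyc = strings k n"
    and arc: "\<forall>i<N. valid_arc k n d (cyc ! i) (cyc ! ((i + 1) mod N))"
    using assms(5) by (auto simp: ham_cycle_valid_def N_def)
  have strs: "strings k n = {xs. set xs \<subseteq> {..<k} \<and> length xs = n}"
    by (auto simp: strings_def)
  have cardS: "card (strings k n) = k ^ n" unfolding strs by (simp add: card_lists_length_eq)
  have NN: "N = k ^ n" using distinct_card[OF dist] setc cardS by (simp add: N_def)
  have Npos: "N > 0" using NN k by simp
  have lw: "length w = N" by (simp add: w_def N_def)
  have str: "\<And>i. i < N \<Longrightarrow> cyc ! i \<in> strings k n" using setc N_def nth_mem by blast
  have strm: "\<And>m. cyc ! (m mod N) \<in> strings k n" using str Npos by simp
  have len: "\<And>m. length (cyc ! (m mod N)) = n" using strm by (simp add: strings_def)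
  have wm: "\<And>m. w ! (m mod N) = cyc ! (m mod N) ! 0" using Npos by (simp add: w_def N_def)
  have arcm: "\<And>m. valid_arc k n d (cyc ! (m mod N)) (cyc ! ((m + 1) mod N))"
    using arc Npos by (metis mod_less_divisor mod_Suc_eq Suc_eq_plus1)
  have shiftnth: "\<And>m j. j + 1 < n \<Longrightarrow> cyc ! ((m + 1) mod N) ! j = cyc ! (m mod N) ! (j + 1)"
  proof -
    fix m j assume j: "j + 1 < n"
    have "drop 1 (cyc ! (m mod N)) = take (n - 1) (cyc ! ((m + 1) mod N))"
      using arcm[of m] by (simp add: valid_arc_def db_arc_def)
    then have "drop 1 (cyc ! (m mod N)) ! j = take (n - 1) (cyc ! ((m + 1) mod N)) ! j" by simp
    then show "cyc ! ((m + 1) mod N) ! j = cyc ! (m mod N) ! (j + 1)"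
      using j len[of m] len[of "m+1"] by simp
  qed
  have shift: "\<And>j i. j < n \<Longrightarrow> w ! ((i + j) mod N) = cyc ! (i mod N) ! j"
  proof -
    fix j show "\<And>i. j < n \<Longrightarrow> w ! ((i + j) mod N) = cyc ! (i mod N) ! j"
    proof (induction j)
      case 0 then show ?case using wm by simp
    next
      case (Suc j)
      have "w ! ((i + Suc j) mod N) = w ! (((i + 1) + j) mod N)" by simp
      also have "\<dots> = cyc ! ((i + 1) mod N) ! j" using Suc.IH[of "Suc i"] Suc.prems by simp
      also have "\<dots> = cyc ! (i mod N) ! Suc j" using shiftnth[of j i] Suc.prems by simp
      finally show ?case .
    qed
  qed
  have csub: "\<And>i. circ_sub w i n = cyc ! (i mod N)"
    by (rule nth_equalityI) (auto simp: circ_sub_def len lw shift)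
  have wset: "set w \<subseteq> {..<k}"
  proof
    fix x assume "x \<in> set w"
    then obtain s where s: "s \<in> set cyc" "x = s ! 0" by (auto simp: w_def)
    then have "s \<in> strings k n" using setc by simp
    then have "set s \<subseteq> {..<k}" "length s = n" by (auto simp: strings_def)
    then show "x \<in> {..<k}" using s n by (metis nth_mem subsetD le_less_trans less_one not_le)
  qed
  have db: "de_bruijn_seq k n w"
    unfolding de_bruijn_seq_def
  proof (intro conjI ballI)
    show "length w = k ^ n" using lw NN by simp
    show "set w \<subseteq> {..<k}" by (rule wset)
    fix x assume x: "x \<in> strings k n"
    then obtain p where p: "p < N" "cyc ! p = x" using setc by (metis N_def in_set_conv_nth)
    have "{i. i < length w \<and> circ_sub w i n = x} = {p}"
    proof (rule set_eqI, rule iffI)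
      fix i assume "i \<in> {i. i < length w \<and> circ_sub w i n = x}"
      then have "i < N" "cyc ! i = x" using csub lw by auto
      then show "i \<in> {p}" using p dist by (simp add: N_def distinct_conv_nth) (metis N_def)
    next
      fix i assume "i \<in> {p}"
      then show "i \<in> {i. i < length w \<and> circ_sub w i n = x}" using csub p lw by simp
    qed
    then show "card {i. i < length w \<and> circ_sub w i n = x} = 1" by simp
  qed
  define Mc where "Mc = (\<lambda>s a. int (count_list s a) + (if d s = a then 1 else 0))"
  have step: "\<And>m a. Mc (cyc ! ((m + 1) mod N)) a = Mc (cyc ! (m mod N)) a
       - (if w ! (m mod N) = a then 1 else 0) + (if (w ! (m mod N) + 1) mod k = a then 1 else 0)"
  proof -
    fix m a
    define s where "s = cyc ! (m mod N)"
    define t where "t = cyc ! ((m + 1) mod N)"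
    have ls: "length s = n" and lt: "length t = n" using len[of m] len[of "m+1"] by (simp_all add: s_def t_def)
    have va: "valid_arc k n d s t" using arcm[of m] by (simp add: s_def t_def)
    have dt: "drop 1 s = take (n - 1) t" using va by (simp add: valid_arc_def db_arc_def)
    have s_eq: "s = s ! 0 # drop 1 s" using ls n by (cases s) auto
    have t_eq: "t = drop 1 s @ [t ! (n - 1)]"
      using dt lt n take_Suc_conv_app_nth[of "n-1" t] by simp
    have cs: "count_list s a = (if s ! 0 = a then 1 else 0) + count_list (drop 1 s) a"
      by (subst s_eq) simp
    have ct: "count_list t a = count_list (drop 1 s) a + (if t ! (n - 1) = a then 1 else 0)"
      by (subst t_eq) simp
    have w0: "w ! (m mod N) = s ! 0" using wm by (simp add: s_def)
    show "Mc t a = Mc s a - (if w ! (m mod N) = a then 1 else 0) + (if (w ! (m mod N) + 1) mod k = a then 1 else 0)"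
    proof -
      have "((s ! 0 + 1) mod k = t ! (n - 1) \<and> d s = d t) \<or> ((s ! 0 + 1) mod k = d t \<and> t ! (n - 1) = d s)"
        using va unfolding valid_arc_def Let_def by blast
      then show ?thesis
      proof
        assume h: "(s ! 0 + 1) mod k = t ! (n - 1) \<and> d s = d t"
        show ?thesis unfolding Mc_def cs ct w0 using h by simp
      next
        assume h: "(s ! 0 + 1) mod k = d t \<and> t ! (n - 1) = d s"
        show ?thesis unfolding Mc_def cs ct w0 using h by simp
      qed
    qed
  qed
  have wk: "\<And>m. w ! (m mod N) < k" using wset lw Npos by (metis lessThan_iff mod_less_divisor nth_mem subsetD)
  have csS: "\<And>i l. circ_sub w i (Suc l) = circ_sub w i l @ [w ! ((i + l) mod N)]"
    by (simp add: circ_sub_def lw)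
  have accum: "\<And>i l a. a < k \<Longrightarrow> Mc (cyc ! ((i + l) mod N)) a - Mc (cyc ! (i mod N)) a
      = int (count_list (circ_sub w i l) ((a + k - 1) mod k)) - int (count_list (circ_sub w i l) a)"
  proof -
    fix i l a assume a: "a < k"
    show "Mc (cyc ! ((i + l) mod N)) a - Mc (cyc ! (i mod N)) a
      = int (count_list (circ_sub w i l) ((a + k - 1) mod k)) - int (count_list (circ_sub w i l) a)"
    proof (induction l)
      case 0 show ?case by (simp add: circ_sub_def)
    next
      case (Suc l)
      define b where "b = w ! ((i + l) mod N)"
      have bk: "b < k" using wk b_def by simp
      have pi: "((b + 1) mod k = a) = ((a + k - 1) mod k = b)" using mod_pred_iff[OF a bk] .
      have st: "Mc (cyc ! ((i + Suc l) mod N)) a = Mc (cyc ! ((i + l) mod N)) a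
          - (if b = a then 1 else 0) + (if (b + 1) mod k = a then 1 else 0)"
        using step[of "i + l" a] by (simp add: b_def)
      have cc: "circ_sub w i (Suc l) = circ_sub w i l @ [b]" using csS b_def by simp
      show ?case using Suc.IH st pi unfolding cc by auto
    qed
  qed
  have sumMc: "\<And>m. (\<Sum>y<k. Mc (cyc ! (m mod N)) y) = int n + 1"
  proof -
    fix m
    define s where "s = cyc ! (m mod N)"
    have ss: "set s \<subseteq> {..<k}" "length s = n" using strm[of m] by (auto simp: s_def strings_def)
    have dsk: "d s < k" using dk strm[of m] by (simp add: s_def)
    have "(\<Sum>y<k. Mc s y) = (\<Sum>y<k. int (count_list s y)) + (\<Sum>y<k. (if d s = y then 1 else 0))"
      by (simp add: Mc_def sum.distrib)
    also have "(\<Sum>y<k. int (count_list s y)) = int n"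
      using sum_count_set[OF ss(1)] ss(2) by (simp flip: of_nat_sum)
    also have "(\<Sum>y<k. (if d s = y then 1 else 0)) = (1::int)" using dsk by simp
    finally show "(\<Sum>y<k. Mc (cyc ! (m mod N)) y) = int n + 1" by (simp add: s_def)
  qed
  have nnMc: "\<And>s y. Mc s y \<ge> 0" by (simp add: Mc_def)
  have shared: "\<And>i j. \<exists>e<k. Mc (cyc ! (i mod N)) e \<ge> 1 \<and> Mc (cyc ! (j mod N)) e \<ge> 1"
  proof -
    fix i j
    define s where "s = cyc ! (i mod N)"
    define t where "t = cyc ! (j mod N)"
    have sS: "s \<in> strings k n" and tS: "t \<in> strings k n" using strm by (simp_all add: s_def t_def)
    show "\<exists>e<k. Mc (cyc ! (i mod N)) e \<ge> 1 \<and> Mc (cyc ! (j mod N)) e \<ge> 1"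
    proof (cases "d s = d t")
      case True
      then show ?thesis using dk sS unfolding s_def[symmetric] t_def[symmetric]
        by (intro exI[of _ "d s"]) (simp add: Mc_def, metis)
    next
      case False
      then obtain c where c: "c \<in> set s" "c \<in> set t" using share sS tS by blast
      have ck: "c < k" using c sS by (auto simp: strings_def)
      have "count_list s c \<noteq> 0" "count_list t c \<noteq> 0" using c by (simp_all add: count_list_0_iff)
      then show ?thesis unfolding s_def[symmetric] t_def[symmetric] using ck
        by (intro exI[of _ c]) (simp add: Mc_def)
    qed
  qed
  have imb: "\<And>i l. imbalance k (circ_sub w i l) \<le> int n"
  proof -
    fix i l
    define sub where "sub = circ_sub w i l"
    have fin: "finite (count_list sub ` {..<k})" "count_list sub ` {..<k} \<noteq> {}" using k by (auto simp: lessThan_empty_iff)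
    have eqs: "{count_list sub a | a. a < k} = count_list sub ` {..<k}" by auto
    obtain a where a: "a < k" "Max (count_list sub ` {..<k}) = count_list sub a"
      using Max_in[OF fin] by auto
    obtain c where c: "c < k" "Min (count_list sub ` {..<k}) = count_list sub c"
      using Min_in[OF fin] by auto
    obtain e where e: "e < k" "Mc (cyc ! (i mod N)) e \<ge> 1" "Mc (cyc ! ((i + l) mod N)) e \<ge> 1"
      using shared by blast
    have D: "\<forall>y<k. Mc (cyc ! ((i + l) mod N)) y - Mc (cyc ! (i mod N)) y
          = int (count_list sub ((y + k - 1) mod k)) - int (count_list sub y)"
      using accum by (simp add: sub_def)
    have "int (count_list sub a) - int (count_list sub c) \<le> int n"
      by (rule interval_bound[OF k D _ _ _ _ e a(1) c(1)]) (use nnMc sumMc in auto)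
    then show "imbalance k (circ_sub w i l) \<le> int n"
      by (simp add: imbalance_def eqs a c sub_def[symmetric])
  qed
  have finS: "finite (circ_substrings w)"
  proof -
    have "circ_substrings w \<subseteq> (\<lambda>(i, l). circ_sub w i l) ` ({..<length w} \<times> {..length w})"
      by (auto simp: circ_substrings_def)
    then show ?thesis by (rule finite_subset) auto
  qed
  have neS: "circ_substrings w \<noteq> {}"
    using Npos lw unfolding circ_substrings_def by blast
  have "discrepancy k w \<le> int n"
    unfolding discrepancy_def using finS neS imb
    by (subst Max_le_iff) (auto simp: circ_substrings_def)
  then show ?thesis using db by (simp add: w_def)
qed
end
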